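(* Let $G$ be a permutation group on a finite set $\Omega$, $|\Omega|=n$, and let $1\le k\le n$. (a) If $G$ is $k$-transitive, then $G$ has the ordered $k$-ut property. (b) If $k\ge 2$ and $G$ has ordered $k$-ut, then $G$ has ordered $(k-1)$-ut. (c) If $k\ge 2$ and $G$ has the $k$-ut property and is generously $(k-1)$-transitive, then $G$ has ordered $k$-ut. (d) If $k\ge2$ and $G$ has ordered $k$-ut, then $G$ is $(k-1)$-transitive. (e) If $k\ge2$ and $G$ has ordered $k$-ut, then $G$ is $(k-1)$-primitive. (f) If $k\ge 2$ and $G$ has ordered $k$-ut, then the stabiliser in $G$ of a point $\alpha$ has ordered $(k-1)$-ut on $\Omega\setminus\{\alpha\}$.
   Context: $G$ has the $k$-ut (universal transversal) property if for every $k$-subset $A\subseteq\Omega$ and every partition $P$ of $\Omega$ into $k$ parts there is $g\in G$ with $Ag$ a transversal of $P$ (meets every part in exactly one point). $G$ has the ordered $k$-ut property if for every $k$-tuple $(a_1,\dots,a_k)$ of distinct points and every ordered partition $(P_1,\dots,P_k)$ of $\Omega$ into $k$ nonempty parts there is $g\in G$ with $a_ig\in P_i$ for all $i$. $G$ is $m$-primitive if it is $m$-transitive and the pointwise stabiliser of any $m-1$ points is primitive on the remaining points (so $1$-primitive means primitive). $G$ is generously $m$-transitive if for every $(m+1)$-subset $M\subseteq\Omega$ the group induced on $M$ by the setwise stabiliser of $M$ is the full symmetric group on $M$. *)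

theory Defs
  imports "HOL-Combinatorics.Permutations" "HOL-Library.Disjoint_Sets"
begin

text \<open>Points are moved by function application, A g is g ` A.\<close>
definition perm_group :: "'a set \<Rightarrow> ('a \<Rightarrow> 'a) set \<Rightarrow> bool" where
  "perm_group \<Omega> G \<longleftrightarrow> (\<forall>g\<in>G. g permutes \<Omega>) \<and> id \<in> G \<and>
     (\<forall>g\<in>G. \<forall>h\<in>G. g \<circ> h \<in> G) \<and> (\<forall>g\<in>G. inv g \<in> G)"

definition distinct_tuple :: "'a set \<Rightarrow> nat \<Rightarrow> (nat \<Rightarrow> 'a) \<Rightarrow> bool" where
  "distinct_tuple \<Omega> k a \<longleftrightarrow> inj_on a {..<k} \<and> a ` {..<k} \<subseteq> \<Omega>"

definition k_transitive :: "'a set \<Rightarrow> ('a \<Rightarrow> 'a) set \<Rightarrow> nat \<Rightarrow> bool" where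
  "k_transitive \<Omega> G k \<longleftrightarrow>
     (\<forall>a b. distinct_tuple \<Omega> k a \<and> distinct_tuple \<Omega> k b \<longrightarrow>
        (\<exists>g\<in>G. \<forall>i<k. g (a i) = b i))"

definition ordered_partition :: "'a set \<Rightarrow> nat \<Rightarrow> (nat \<Rightarrow> 'a set) \<Rightarrow> bool" where
  "ordered_partition \<Omega> k P \<longleftrightarrow>
     (\<forall>i<k. P i \<noteq> {}) \<and> (\<forall>i<k. \<forall>j<k. i \<noteq> j \<longrightarrow> P i \<inter> P j = {}) \<and>
     (\<Union>i<k. P i) = \<Omega>"

definition ordered_ut :: "'a set \<Rightarrow> ('a \<Rightarrow> 'a) set \<Rightarrow> nat \<Rightarrow> bool" where
  "ordered_ut \<Omega> G k \<longleftrightarrow>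
     (\<forall>a P. distinct_tuple \<Omega> k a \<and> ordered_partition \<Omega> k P \<longrightarrow>
        (\<exists>g\<in>G. \<forall>i<k. g (a i) \<in> P i))"

definition ut :: "'a set \<Rightarrow> ('a \<Rightarrow> 'a) set \<Rightarrow> nat \<Rightarrow> bool" where
  "ut \<Omega> G k \<longleftrightarrow>
     (\<forall>A \<P>. A \<subseteq> \<Omega> \<and> card A = k \<and> partition_on \<Omega> \<P> \<and> card \<P> = k \<longrightarrow>
        (\<exists>g\<in>G. \<forall>p\<in>\<P>. card (g ` A \<inter> p) = 1))"

definition transitive_on :: "('a \<Rightarrow> 'a) set \<Rightarrow> 'a set \<Rightarrow> bool" where
  "transitive_on H \<Delta> \<longleftrightarrow> (\<forall>x\<in>\<Delta>. \<forall>y\<in>\<Delta>. \<exists>h\<in>H. h x = y)"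

definition is_block :: "('a \<Rightarrow> 'a) set \<Rightarrow> 'a set \<Rightarrow> bool" where
  "is_block H B \<longleftrightarrow> (\<forall>h\<in>H. h ` B = B \<or> h ` B \<inter> B = {})"

definition primitive_on :: "('a \<Rightarrow> 'a) set \<Rightarrow> 'a set \<Rightarrow> bool" where
  "primitive_on H \<Delta> \<longleftrightarrow> transitive_on H \<Delta> \<and>
     (\<forall>B. B \<subseteq> \<Delta> \<and> B \<noteq> {} \<and> is_block H B \<longrightarrow> card B = 1 \<or> B = \<Delta>)"

definition m_primitive :: "'a set \<Rightarrow> ('a \<Rightarrow> 'a) set \<Rightarrow> nat \<Rightarrow> bool" where
  "m_primitive \<Omega> G m \<longleftrightarrow> k_transitive \<Omega> G m \<and>
     (\<forall>c. distinct_tuple \<Omega> (m - 1) c \<longrightarrow>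
        primitive_on {g\<in>G. \<forall>i<m - 1. g (c i) = c i} (\<Omega> - c ` {..<m - 1}))"

definition generously_transitive :: "'a set \<Rightarrow> ('a \<Rightarrow> 'a) set \<Rightarrow> nat \<Rightarrow> bool" where
  "generously_transitive \<Omega> G m \<longleftrightarrow>
     (\<forall>M. M \<subseteq> \<Omega> \<and> card M = m + 1 \<longrightarrow>
        (\<forall>\<sigma>. \<sigma> permutes M \<longrightarrow> (\<exists>g\<in>G. g ` M = M \<and> (\<forall>x\<in>M. g x = \<sigma> x))))"

definition stabiliser :: "('a \<Rightarrow> 'a) set \<Rightarrow> 'a \<Rightarrow> ('a \<Rightarrow> 'a) set" where
  "stabiliser G \<alpha> = {g\<in>G. g \<alpha> = \<alpha>}"

end

theory Submission
  imports Defs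
begin


lemma ut_elim: "ordered_ut \<Omega> G k \<Longrightarrow> distinct_tuple \<Omega> k a \<Longrightarrow> ordered_partition \<Omega> k P
  \<Longrightarrow> \<exists>g\<in>G. \<forall>i<k. g (a i) \<in> P i"
  by (auto simp: ordered_ut_def)

lemma dt_upd: "distinct_tuple \<Omega> m a \<Longrightarrow> x \<in> \<Omega> \<Longrightarrow> x \<notin> a ` {..<m}
  \<Longrightarrow> distinct_tuple \<Omega> (Suc m) (a(m:=x))"
  unfolding distinct_tuple_def by (auto simp: lessThan_Suc inj_on_def)

lemma dt_extra: "finite \<Omega> \<Longrightarrow> distinct_tuple \<Omega> m a \<Longrightarrow> m < card \<Omega> \<Longrightarrow> \<exists>x\<in>\<Omega>. x \<notin> a ` {..<m}"
proof (rule ccontr)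
  assume f: "finite \<Omega>" and d: "distinct_tuple \<Omega> m a" and c: "m < card \<Omega>" and n: "\<not> (\<exists>x\<in>\<Omega>. x \<notin> a ` {..<m})"
  then have "\<Omega> \<subseteq> a ` {..<m}" by blast
  then have "card \<Omega> \<le> card (a ` {..<m})" by (simp add: card_mono)
  also have "\<dots> = m" using d by (simp add: distinct_tuple_def card_image)
  finally show False using c by simp
qed

lemma reps: "ordered_partition \<Omega> k P \<Longrightarrow> \<exists>b. distinct_tuple \<Omega> k b \<and> (\<forall>i<k. b i \<in> P i)"
proof -
  assume op: "ordered_partition \<Omega> k P"
  then have "\<forall>i<k. \<exists>x. x \<in> P i" by (auto simp: ordered_partition_def)
  then obtain b where b: "\<forall>i<k. b i \<in> P i" by metis
  have "inj_on b {..<k}"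
  proof (rule inj_onI)
    fix i j assume "i \<in> {..<k}" "j \<in> {..<k}" "b i = b j"
    then show "i = j" using b op unfolding ordered_partition_def by (metis disjoint_iff lessThan_iff)
  qed
  moreover have "b ` {..<k} \<subseteq> \<Omega>" using b op unfolding ordered_partition_def by blast
  ultimately show ?thesis using b by (auto simp: distinct_tuple_def)
qed

lemma op_ext: "ordered_partition (\<Omega> - {y}) m P \<Longrightarrow> y \<in> \<Omega> \<Longrightarrow> ordered_partition \<Omega> (Suc m) (P(m:={y}))"
  unfolding ordered_partition_def by (auto simp: lessThan_Suc)

lemma part_a: "k_transitive \<Omega> G k \<Longrightarrow> ordered_ut \<Omega> G k"
  unfolding ordered_ut_def
proof (intro allI impI)
  fix a P assume kt: "k_transitive \<Omega> G k" and h: "distinct_tuple \<Omega> k a \<and> ordered_partition \<Omega> k P"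
  then obtain b where "distinct_tuple \<Omega> k b" "\<forall>i<k. b i \<in> P i" using reps by blast
  with kt h show "\<exists>g\<in>G. \<forall>i<k. g (a i) \<in> P i" unfolding k_transitive_def by metis
qed

lemma part_b: assumes f: "finite \<Omega>" and u: "ordered_ut \<Omega> G (Suc m)" and c: "Suc m \<le> card \<Omega>"
  shows "ordered_ut \<Omega> G m"
  unfolding ordered_ut_def
proof (intro allI impI)
  fix a P assume h: "distinct_tuple \<Omega> m a \<and> ordered_partition \<Omega> m P"
  then obtain b where b: "distinct_tuple \<Omega> m b" "\<forall>i<m. b i \<in> P i" using reps by blast
  obtain y where y: "y \<in> \<Omega>" "y \<notin> b ` {..<m}" using dt_extra[OF f b(1)] c by auto
  obtain x where x: "x \<in> \<Omega>" "x \<notin> a ` {..<m}" using dt_extra[OF f, of m a] h c by auto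
  have "ordered_partition (\<Omega> - {y}) m (\<lambda>i. P i - {y})"
    unfolding ordered_partition_def
  proof (intro conjI allI impI)
    fix i assume "i < m" then show "P i - {y} \<noteq> {}" using b y by (metis Diff_iff empty_iff image_eqI lessThan_iff singletonD)
  next
    fix i j assume "i < m" "j < m" "i \<noteq> j" then show "(P i - {y}) \<inter> (P j - {y}) = {}"
      using h unfolding ordered_partition_def by blast
  next
    show "(\<Union>i<m. P i - {y}) = \<Omega> - {y}" using h unfolding ordered_partition_def by blast
  qed
  then have op: "ordered_partition \<Omega> (Suc m) ((\<lambda>i. P i - {y})(m:={y}))" using op_ext y by fast
  obtain g where g: "g \<in> G" "\<forall>i<Suc m. g ((a(m:=x)) i) \<in> ((\<lambda>i. P i - {y})(m:={y})) i"
    using ut_elim[OF u dt_upd[OF _ x] op] h by blast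
  show "\<exists>g\<in>G. \<forall>i<m. g (a i) \<in> P i"
  proof (intro bexI[OF _ g(1)] allI impI)
    fix i assume "i < m" then show "g (a i) \<in> P i" using g(2)[rule_format, of i] by auto
  qed
qed


lemma part_d: assumes f: "finite \<Omega>" and u: "ordered_ut \<Omega> G (Suc n)" and c: "Suc n \<le> card \<Omega>"
  shows "k_transitive \<Omega> G n"
  unfolding k_transitive_def
proof (intro allI impI)
  fix a b assume h: "distinct_tuple \<Omega> n a \<and> distinct_tuple \<Omega> n b"
  obtain y where y: "y \<in> \<Omega>" "y \<notin> b ` {..<n}" using dt_extra[OF f, of n b] h c by auto
  obtain x where x: "x \<in> \<Omega>" "x \<notin> a ` {..<n}" using dt_extra[OF f, of n a] h c by auto
  define Q where "Q = (\<lambda>i. if i < n then {b i} else \<Omega> - b ` {..<n})"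
  have op: "ordered_partition \<Omega> (Suc n) Q"
    unfolding ordered_partition_def
  proof (intro conjI allI impI)
    fix i assume "i < Suc n" then show "Q i \<noteq> {}" using y by (auto simp: Q_def)
  next
    fix i j assume "i < Suc n" "j < Suc n" "i \<noteq> j" then show "Q i \<inter> Q j = {}"
      using h unfolding Q_def distinct_tuple_def inj_on_def by auto
  next
    show "(\<Union>i<Suc n. Q i) = \<Omega>" using h unfolding Q_def distinct_tuple_def by (auto simp: lessThan_Suc)
  qed
  obtain g where g: "g \<in> G" "\<forall>i<Suc n. g ((a(n:=x)) i) \<in> Q i"
    using ut_elim[OF u dt_upd[OF _ x] op] h by blast
  show "\<exists>g\<in>G. \<forall>i<n. g (a i) = b i"
  proof (intro bexI[OF _ g(1)] allI impI)
    fix i assume "i < n" then show "g (a i) = b i" using g(2)[rule_format, of i] by (auto simp: Q_def)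
  qed
qed

lemma part_f: assumes u: "ordered_ut \<Omega> G (Suc n)" and al: "\<alpha> \<in> \<Omega>"
  shows "ordered_ut (\<Omega> - {\<alpha>}) (stabiliser G \<alpha>) n"
  unfolding ordered_ut_def
proof (intro allI impI)
  fix a P assume h: "distinct_tuple (\<Omega> - {\<alpha>}) n a \<and> ordered_partition (\<Omega> - {\<alpha>}) n P"
  have d: "distinct_tuple \<Omega> (Suc n) (a(n:=\<alpha>))"
    by (rule dt_upd) (use h al in \<open>auto simp: distinct_tuple_def\<close>)
  obtain g where g: "g \<in> G" "\<forall>i<Suc n. g ((a(n:=\<alpha>)) i) \<in> (P(n:={\<alpha>})) i"
    using ut_elim[OF u d op_ext] h al by blast
  have "g \<in> stabiliser G \<alpha>" using g by (auto simp: stabiliser_def)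
  then show "\<exists>g\<in>stabiliser G \<alpha>. \<forall>i<n. g (a i) \<in> P i"
    using g(2) by (metis fun_upd_other less_Suc_eq nat_neq_iff)
qed

lemma part_e: assumes f: "finite \<Omega>" and u: "ordered_ut \<Omega> G (Suc (Suc m))" and c: "Suc (Suc m) \<le> card \<Omega>"
  shows "m_primitive \<Omega> G (Suc m)"
proof -
  have kt: "k_transitive \<Omega> G (Suc m)" using part_d[OF f u c] .
  have "primitive_on {g\<in>G. \<forall>i<m. g (c i) = c i} (\<Omega> - c ` {..<m})" if dc: "distinct_tuple \<Omega> m c" for c
  proof -
    define H where "H = {g\<in>G. \<forall>i<m. g (c i) = c i}"
    define \<Delta> where "\<Delta> = \<Omega> - c ` {..<m}"
    have tr: "transitive_on H \<Delta>"
      unfolding transitive_on_def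
    proof (intro ballI)
      fix x y assume "x \<in> \<Delta>" "y \<in> \<Delta>"
      then have "distinct_tuple \<Omega> (Suc m) (c(m:=x))" "distinct_tuple \<Omega> (Suc m) (c(m:=y))"
        using dt_upd[OF dc] by (auto simp: \<Delta>_def)
      then obtain g where "g \<in> G" "\<forall>i<Suc m. g ((c(m:=x)) i) = (c(m:=y)) i"
        using kt unfolding k_transitive_def by blast
      then have g1: "g \<in> G" and g2: "\<forall>i<Suc m. g ((c(m:=x)) i) = (c(m:=y)) i" by blast+
      have "\<forall>i<m. g (c i) = c i"
      proof (intro allI impI)
        fix i assume "i < m" then show "g (c i) = c i" using g2[rule_format, of i] by simp
      qed
      moreover have "g x = y" using g2[rule_format, of m] by simp
      ultimately show "\<exists>h\<in>H. h x = y" unfolding H_def using g1 by blast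
    qed
    have bl: "card B = 1 \<or> B = \<Delta>" if B: "B \<subseteq> \<Delta>" "B \<noteq> {}" "is_block H B" for B
    proof (rule ccontr)
      assume n: "\<not> (card B = 1 \<or> B = \<Delta>)"
      obtain x where x: "x \<in> B" using B by auto
      have "B \<noteq> {x}" using n by auto
      then obtain y where y: "y \<in> B" "y \<noteq> x" using x by auto
      obtain z where z: "z \<in> \<Delta>" "z \<notin> B" using n B by auto
      have d1: "distinct_tuple \<Omega> (Suc m) (c(m:=x))" using dt_upd[OF dc] x B by (auto simp: \<Delta>_def)
      have d2: "distinct_tuple \<Omega> (Suc (Suc m)) (c(m:=x, Suc m:=y))"
        by (rule dt_upd[OF d1]) (use x y B in \<open>auto simp: \<Delta>_def\<close>)
      define Q where "Q = (\<lambda>i. if i < m then {c i} else if i = m then B else \<Delta> - B)"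
      have op: "ordered_partition \<Omega> (Suc (Suc m)) Q"
        unfolding ordered_partition_def
      proof (intro conjI allI impI)
        fix i assume "i < Suc (Suc m)" then show "Q i \<noteq> {}" using z B by (auto simp: Q_def)
      next
        fix i j assume "i < Suc (Suc m)" "j < Suc (Suc m)" "i \<noteq> j" then show "Q i \<inter> Q j = {}"
          using dc B unfolding Q_def distinct_tuple_def inj_on_def \<Delta>_def by auto
      next
        show "(\<Union>i<Suc (Suc m). Q i) = \<Omega>" using dc B unfolding Q_def distinct_tuple_def \<Delta>_def
          by (auto simp: lessThan_Suc)
      qed
      obtain g where g: "g \<in> G" "\<forall>i<Suc (Suc m). g ((c(m:=x, Suc m:=y)) i) \<in> Q i"
        using ut_elim[OF u d2 op] by blast
      have gc: "\<forall>i<m. g (c i) = c i"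
      proof (intro allI impI)
        fix i assume "i < m" then show "g (c i) = c i" using g(2)[rule_format, of i] by (auto simp: Q_def)
      qed
      have gx: "g x \<in> B" using g(2)[rule_format, of m] by (auto simp: Q_def)
      have gy: "g y \<notin> B" using g(2)[rule_format, of "Suc m"] by (auto simp: Q_def)
      have "g \<in> H" using g(1) gc by (auto simp: H_def)
      then have "g ` B = B \<or> g ` B \<inter> B = {}" using B(3) by (auto simp: is_block_def)
      then show False using gx gy x y by blast
    qed
    show ?thesis using tr bl unfolding primitive_on_def H_def \<Delta>_def by blast
  qed
  then show ?thesis using kt by (auto simp: m_primitive_def)
qed



lemma part_c: assumes u: "ut \<Omega> G (Suc m)" and gt: "generously_transitive \<Omega> G m" and pg: "perm_group \<Omega> G"
  shows "ordered_ut \<Omega> G (Suc m)"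
  unfolding ordered_ut_def
proof (intro allI impI)
  fix a P assume h: "distinct_tuple \<Omega> (Suc m) a \<and> ordered_partition \<Omega> (Suc m) P"
  define k where "k = Suc m"
  have h1: "distinct_tuple \<Omega> k a" and h2: "ordered_partition \<Omega> k P" using h k_def by simp_all
  have ia: "inj_on a {..<k}" and aO: "a ` {..<k} \<subseteq> \<Omega>" using h1 unfolding distinct_tuple_def by simp_all
  have Pne: "\<forall>i<k. P i \<noteq> {}" and Pd: "\<forall>i<k. \<forall>j<k. i \<noteq> j \<longrightarrow> P i \<inter> P j = {}"
    and Pu: "(\<Union>i<k. P i) = \<Omega>" using h2 unfolding ordered_partition_def by simp_all
  have iP: "inj_on P {..<k}"
  proof (rule inj_onI)
    fix i j assume ij: "i \<in> {..<k}" "j \<in> {..<k}" "P i = P j"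
    show "i = j"
    proof (rule ccontr)
      assume "i \<noteq> j"
      then have "P i \<inter> P j = {}" using Pd ij(1,2) by blast
      then have "P i = {}" using ij(3) by simp
      then show False using Pne ij by simp
    qed
  qed
  have cA: "card (a ` {..<k}) = k" using ia by (simp add: card_image)
  have cP: "card (P ` {..<k}) = k" using iP by (simp add: card_image)
  have pP: "partition_on \<Omega> (P ` {..<k})"
    unfolding partition_on_def
  proof (intro conjI)
    show "\<Union> (P ` {..<k}) = \<Omega>" using Pu .
    show "{} \<notin> P ` {..<k}" using Pne by auto
    show "disjoint (P ` {..<k})" unfolding disjoint_def
    proof (intro ballI impI)
      fix A B assume "A \<in> P ` {..<k}" "B \<in> P ` {..<k}" "A \<noteq> B"
      then obtain i j where "i < k" "j < k" "A = P i" "B = P j" by auto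
      then show "A \<inter> B = {}" using Pd \<open>A \<noteq> B\<close> by blast
    qed
  qed
  obtain g where g: "g \<in> G" "\<forall>p\<in>P ` {..<k}. card (g ` (a ` {..<k}) \<inter> p) = 1"
    using u aO cA pP cP unfolding ut_def k_def by blast
  have gp: "g permutes \<Omega>" using pg g(1) unfolding perm_group_def by blast
  define b where "b = g \<circ> a"
  define M where "M = b ` {..<k}"
  have M_eq: "M = g ` (a ` {..<k})" by (simp add: M_def b_def image_comp)
  have ib: "inj_on b {..<k}" unfolding b_def
    using ia permutes_inj[OF gp] by (simp add: comp_inj_on inj_on_subset)
  have MO: "M \<subseteq> \<Omega>" using aO permutes_in_image[OF gp] by (auto simp: M_def b_def)
  have cM: "card M = m + 1" using ib by (simp add: M_def card_image k_def)
  have "\<forall>j<k. \<exists>y. M \<inter> P j = {y}" using g(2) by (auto simp: M_eq card_1_singleton_iff)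
  then obtain r where r: "\<forall>j<k. M \<inter> P j = {r j}" by metis
  have rM: "r ` {..<k} \<subseteq> M" using r by blast
  have rP: "\<forall>j<k. r j \<in> P j" using r by blast
  have ir: "inj_on r {..<k}"
  proof (rule inj_onI)
    fix i j assume ij: "i \<in> {..<k}" "j \<in> {..<k}" "r i = r j"
    show "i = j"
    proof (rule ccontr)
      assume "i \<noteq> j"
      then have "P i \<inter> P j = {}" using Pd ij(1,2) by blast
      moreover have "r i \<in> P i" "r i \<in> P j" using rP ij by auto
      ultimately show False by blast
    qed
  qed
  have "card (r ` {..<k}) = card M" using ir cM by (simp add: card_image k_def)
  then have "r ` {..<k} = M" using rM by (simp add: card_subset_eq M_def)
  then have br: "bij_betw r {..<k} M" using ir by (simp add: bij_betw_def)
  have bb: "bij_betw b {..<k} M" using ib by (simp add: M_def bij_betw_def)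
  have bi: "bij_betw (inv_into {..<k} b) M {..<k}" using bij_betw_inv_into[OF bb] .
  define \<sigma> where "\<sigma> = (\<lambda>x. if x \<in> M then r (inv_into {..<k} b x) else x)"
  have "bij_betw (r \<circ> inv_into {..<k} b) M M" using bij_betw_trans[OF bi br] .
  then have "bij_betw \<sigma> M M" by (rule bij_betw_cong[THEN iffD1, rotated]) (simp add: \<sigma>_def)
  then have sp: "\<sigma> permutes M" by (rule bij_imp_permutes) (simp add: \<sigma>_def)
  obtain h where hh: "h \<in> G" "\<forall>x\<in>M. h x = \<sigma> x" using gt[unfolded generously_transitive_def, rule_format, OF conjI[OF MO cM] sp] by blast
  have hg: "h \<circ> g \<in> G" using pg hh(1) g(1) unfolding perm_group_def by blast
  show "\<exists>g\<in>G. \<forall>i<Suc m. g (a i) \<in> P i"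
  proof (intro bexI[OF _ hg] allI impI)
    fix i assume i: "i < Suc m"
    then have "b i \<in> M" by (simp add: M_def k_def)
    then have "(h \<circ> g) (a i) = r i"
    proof -
      assume bM: "b i \<in> M"
      have "(h \<circ> g) (a i) = h (b i)" by (simp add: b_def)
      also have "\<dots> = \<sigma> (b i)" using hh(2) bM by simp
      also have "\<dots> = r i" using bM ib i by (simp add: \<sigma>_def inv_into_f_f k_def)
      finally show ?thesis .
    qed
    then show "(h \<circ> g) (a i) \<in> P i" using rP i by (simp add: k_def)
  qed
qed


theorem proposition2p1:
  fixes \<Omega> :: "'a set" and G :: "('a \<Rightarrow> 'a) set" and k :: nat
  assumes "finite \<Omega>" and "perm_group \<Omega> G" and "1 \<le> k" and "k \<le> card \<Omega>"
  shows "(k_transitive \<Omega> G k \<longrightarrow> ordered_ut \<Omega> G k)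
    \<and> (k \<ge> 2 \<and> ordered_ut \<Omega> G k \<longrightarrow> ordered_ut \<Omega> G (k - 1))
    \<and> (k \<ge> 2 \<and> ut \<Omega> G k \<and> generously_transitive \<Omega> G (k - 1) \<longrightarrow> ordered_ut \<Omega> G k)
    \<and> (k \<ge> 2 \<and> ordered_ut \<Omega> G k \<longrightarrow> k_transitive \<Omega> G (k - 1))
    \<and> (k \<ge> 2 \<and> ordered_ut \<Omega> G k \<longrightarrow> m_primitive \<Omega> G (k - 1))
    \<and> (k \<ge> 2 \<and> ordered_ut \<Omega> G k \<longrightarrow>
         (\<forall>\<alpha>\<in>\<Omega>. ordered_ut (\<Omega> - {\<alpha>}) (stabiliser G \<alpha>) (k - 1)))"
proof -
  obtain m where km: "k = Suc m" using assms(3) by (cases k) auto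
  have A: "k_transitive \<Omega> G k \<longrightarrow> ordered_ut \<Omega> G k" using part_a by blast
  have B: "ordered_ut \<Omega> G k \<longrightarrow> ordered_ut \<Omega> G (k - 1)"
    using part_b[OF assms(1), of G m] assms(4) km by simp
  have C: "ut \<Omega> G k \<and> generously_transitive \<Omega> G (k - 1) \<longrightarrow> ordered_ut \<Omega> G k"
    using part_c[of \<Omega> G m] assms(2) km by simp
  have D: "ordered_ut \<Omega> G k \<longrightarrow> k_transitive \<Omega> G (k - 1)"
    using part_d[OF assms(1), of G m] assms(4) km by simp
  have E: "k \<ge> 2 \<and> ordered_ut \<Omega> G k \<longrightarrow> m_primitive \<Omega> G (k - 1)"
  proof
    assume h: "k \<ge> 2 \<and> ordered_ut \<Omega> G k"
    then obtain n where "k = Suc (Suc n)" by (cases k; cases "k - 1") auto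
    then show "m_primitive \<Omega> G (k - 1)" using part_e[OF assms(1), of G n] h assms(4) by simp
  qed
  have F: "ordered_ut \<Omega> G k \<longrightarrow> (\<forall>\<alpha>\<in>\<Omega>. ordered_ut (\<Omega> - {\<alpha>}) (stabiliser G \<alpha>) (k - 1))"
    using part_f[of \<Omega> G m] km by simp
  show ?thesis using A B C D E F by blast
qed

end
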